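(* Let $d\geq 1$. For each $k\geq 1$ let $\{B_{k\ell}:\ell\geq 1\}$ be a set of basis functions, and for each $j\in\{1,\ldots,d\}$ and $k\geq1$ let $\{B_{jkr}:r\geq 1\}$ be a set of basis functions. Let $g:\mathbb{R}\to[0,1]$ be non-constant and Lipschitz continuous. Then for any continuous function $f:[0,1]^d\to\mathbb{R}$ and any constant $\epsilon>0$, there exist integers $p\geq 1$, $q_k\geq 1$, $q_{jk}\geq 1$ ($1\le j\le d$, $1\le k\le p$) and real numbers $c_{k\ell}, c_{jkr}, b_k, b$ such that $$\sup_{\mathbf{x}=(x_1,\ldots,x_d)\in[0,1]^d}\left|f(\mathbf{x})-\left(\sum_{k=1}^p\sum_{\ell=1}^{q_k}c_{k\ell}B_{k\ell}\Big(g\Big(\sum_{j=1}^d\sum_{r=1}^{q_{jk}}c_{jkr}B_{jkr}(x_j)+b_k\Big)\Big)+b\right)\right|<\epsilon.$$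
   Context: A set $\{B_r:[0,1]\to\mathbb{R}\,|\,r\geq1\}$ of functions is called a set of basis functions if for every continuous $\phi:[0,1]\to\mathbb{R}$ and every $\epsilon>0$ there exist $q\geq1$ and $c_1,\ldots,c_q,c\in\mathbb{R}$ with $\sup_{x\in[0,1]}|\phi(x)-(\sum_{r=1}^q c_rB_r(x)+c)|<\epsilon$ (e.g. $\{x^r\}$, $\{\cos(r\pi x)\}$). *)

theory Defs
  imports "HOL-Analysis.Analysis"
begin

text \<open>A family B r (r >= 1) of functions [0,1] -> R is a set of basis functions if every
continuous phi on [0,1] is uniformly approximable by finite linear combinations plus a constant.
"sup_{x in [0,1]} |...| < eps" is written as: some delta < eps bounds |...| on [0,1].\<close>
definition basis_functions :: "(nat \<Rightarrow> real \<Rightarrow> real) \<Rightarrow> bool" where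
  "basis_functions B \<longleftrightarrow>
     (\<forall>\<phi> :: real \<Rightarrow> real. \<forall>\<epsilon>>0. continuous_on {0..1} \<phi> \<longrightarrow>
        (\<exists>q::nat. q \<ge> 1 \<and> (\<exists>(c::nat \<Rightarrow> real) (c0::real).
           (\<exists>\<delta><\<epsilon>. \<forall>x\<in>{0..1}. \<bar>\<phi> x - ((\<Sum>r=1..q. c r * B r x) + c0)\<bar> \<le> \<delta>))))"

end

theory Submission imports Defs begin

definition expsum :: "(real \<times> ('d::finite \<Rightarrow> real \<Rightarrow> real)) list \<Rightarrow> real^'d \<Rightarrow> real" where
  "expsum l x = sum_list (map (\<lambda>p. fst p * exp (\<Sum>j\<in>UNIV. snd p j (x$j))) l)"

definition okl :: "(real \<times> ('d::finite \<Rightarrow> real \<Rightarrow> real)) list \<Rightarrow> bool" where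
  "okl l \<longleftrightarrow> (\<forall>p\<in>set l. \<forall>j. continuous_on UNIV (snd p j))"

lemma expsum_append: "expsum (l1 @ l2) x = expsum l1 x + expsum l2 x"
  by (simp add: expsum_def)

definition lmul where
  "lmul l1 l2 = concat (map (\<lambda>p1. map (\<lambda>p2. (fst p1 * fst p2, \<lambda>j t. snd p1 j t + snd p2 j t)) l2) l1)"

lemma expsum_mul: "expsum (lmul l1 l2) x = expsum l1 x * expsum l2 x"
proof (induction l1)
  case Nil
  then show ?case by (simp add: expsum_def lmul_def)
next
  case (Cons a l1)
  have "expsum (map (\<lambda>p2. (fst a * fst p2, \<lambda>j t. snd a j t + snd p2 j t)) l2) x
        = fst a * exp (\<Sum>j\<in>UNIV. snd a j (x$j)) * expsum l2 x"
    unfolding expsum_def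
    by (induction l2) (simp_all add: sum.distrib exp_add algebra_simps)
  then show ?case using Cons by (simp add: expsum_def lmul_def algebra_simps)
qed

lemma okl_mul: "okl l1 \<Longrightarrow> okl l2 \<Longrightarrow> okl (lmul l1 l2)"
  unfolding okl_def lmul_def by (auto intro!: continuous_on_add)

lemma cont_comp_nth: "continuous_on UNIV u \<Longrightarrow> continuous_on S (\<lambda>x::real^'n. u (x$j))"
  by (rule continuous_on_compose2[where g=u]) (auto intro: continuous_intros)

lemma expsum_cont: "okl l \<Longrightarrow> continuous_on S (expsum l)"
proof (induction l)
  case Nil
  then show ?case by (simp add: expsum_def)
next
  case (Cons a l)
  have "continuous_on S (\<lambda>x. fst a * exp (\<Sum>j\<in>UNIV. snd a j (x$j)))"
    using Cons.prems unfolding okl_def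
    by (auto intro!: continuous_intros cont_comp_nth)
  moreover have "expsum (a # l) = (\<lambda>x. fst a * exp (\<Sum>j\<in>UNIV. snd a j (x$j)) + expsum l x)"
    by (auto simp: expsum_def)
  moreover have "continuous_on S (expsum l)" using Cons by (auto simp: okl_def)
  ultimately show ?case by (auto intro!: continuous_on_add)
qed

lemma cube_eq: "{x::real^'d. \<forall>j. 0 \<le> x$j \<and> x$j \<le> 1} = cbox 0 1"
  by (auto simp: mem_box_cart)

lemma SW_exp:
  fixes f :: "real^'d::finite \<Rightarrow> real"
  assumes "continuous_on {x. \<forall>j. 0 \<le> x$j \<and> x$j \<le> 1} f" "e > 0"
  shows "\<exists>l. okl l \<and> (\<forall>x\<in>{x. \<forall>j. 0 \<le> x$j \<and> x$j \<le> 1}. \<bar>f x - expsum l x\<bar> < e)"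
proof -
  let ?S = "{x::real^'d. \<forall>j. 0 \<le> x$j \<and> x$j \<le> 1}"
  let ?P = "\<lambda>\<phi>. \<exists>l. okl l \<and> \<phi> = expsum l"
  have "\<exists>g. ?P g \<and> (\<forall>x\<in>?S. \<bar>f x - g x\<bar> < e)"
  proof (rule Stone_Weierstrass_HOL)
    show "compact ?S" unfolding cube_eq by simp
    show "?P (\<lambda>x. c)" for c
      by (rule exI[of _ "[(c, \<lambda>j t. 0)]"]) (auto simp: okl_def expsum_def)
    show "continuous_on ?S f" by fact
    show "0 < e" by fact
    show "continuous_on ?S g" if "?P g" for g using that expsum_cont by blast
    show "?P (\<lambda>x. g x + h x)" if H: "?P g \<and> ?P h" for g h
    proof -
      obtain l1 l2 where "okl l1" "okl l2" "g = expsum l1" "h = expsum l2" using H by blast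
      then show ?thesis
        by (intro exI[of _ "l1 @ l2"]) (auto simp: okl_def expsum_append)
    qed
    show "?P (\<lambda>x. g x * h x)" if H: "?P g \<and> ?P h" for g h
    proof -
      obtain l1 l2 where "okl l1" "okl l2" "g = expsum l1" "h = expsum l2" using H by blast
      then show ?thesis
        by (intro exI[of _ "lmul l1 l2"]) (auto simp: okl_mul expsum_mul)
    qed
    show "\<exists>g. ?P g \<and> g x \<noteq> g y" if H: "x \<in> ?S \<and> y \<in> ?S \<and> x \<noteq> y" for x y
    proof -
      obtain j where j: "x$j \<noteq> y$j" using H by (auto simp: vec_eq_iff)
      let ?l = "[(1::real, \<lambda>(i::'d) (t::real). if i = j then t else 0)]"
      have "okl ?l" unfolding okl_def
      proof (intro ballI allI)
        fix p i assume "p \<in> set ?l"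
        then show "continuous_on UNIV (snd p i)"
          by (cases "i = j") (auto simp: continuous_on_const continuous_on_id)
      qed
      moreover have "expsum ?l z = exp (z$j)" for z
        by (simp add: expsum_def if_distrib cong: if_cong)
      ultimately show ?thesis using j by (intro exI[of _ "expsum ?l"]) auto
    qed
  qed
  then show ?thesis by blast
qed

lemma slope_incr:
  fixes g :: "real \<Rightarrow> real"
  assumes lip: "L-lipschitz_on UNIV g" and ab: "a < b" "g a < g b" and eta: "\<eta> > 0"
  shows "\<exists>x0 l \<Delta>. l > 0 \<and> \<Delta> > 0 \<and> (\<forall>s\<in>{0..1}. \<bar>g (x0 + s*l) - g x0 - s*\<Delta>\<bar> \<le> \<eta>*\<Delta>)"
proof -
  define Sl where "Sl = {(g y - g x)/(y - x) | x y. x < y}"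
  have slL: "(g y - g x)/(y - x) \<le> L" if "x < y" for x y
  proof -
    have "dist (g y) (g x) \<le> L * dist y x" using lipschitz_onD[OF lip] by simp
    then have "g y - g x \<le> L * (y - x)" using that by (simp add: dist_real_def)
    then show ?thesis using that by (simp add: divide_le_eq)
  qed
  have bdd: "bdd_above Sl" unfolding Sl_def bdd_above_def using slL by blast
  have ne: "Sl \<noteq> {}" unfolding Sl_def using ab by blast
  define D where "D = Sup Sl"
  have upper: "(g y - g x)/(y - x) \<le> D" if "x < y" for x y
    unfolding D_def by (rule cSup_upper[OF _ bdd]) (use that in \<open>auto simp: Sl_def\<close>)
  have "0 < (g b - g a)/(b - a)" using ab by simp
  also have "\<dots> \<le> D" using upper ab by blast
  finally have Dpos: "D > 0" .
  have "D - \<eta>*D < D" using Dpos eta by simp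
  then obtain v where "v \<in> Sl" "D - \<eta>*D < v" unfolding D_def using less_cSup_iff[OF ne bdd] by blast
  then obtain x y where xy: "x < y" and S: "D - \<eta>*D < (g y - g x)/(y - x)" unfolding Sl_def by blast
  have gyx: "g y - g x \<ge> (D - \<eta>*D) * (y - x)" using S xy by (simp add: pos_less_divide_eq less_imp_le)
  define l where "l = y - x"
  have lpos: "l > 0" using xy l_def by simp
  show ?thesis
  proof (intro exI conjI ballI)
    show "l > 0" by fact
    show "D * l > 0" using Dpos lpos by simp
    fix s :: real assume s: "s \<in> {0..1}"
    define z where "z = x + s*l"
    have up: "g z - g x \<le> D * (z - x)"
    proof (cases "s = 0")
      case True then show ?thesis by (simp add: z_def)
    next
      case False
      then have "x < z" using s lpos by (simp add: z_def)
      then show ?thesis using upper[of x z] by (simp add: divide_le_eq)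
    qed
    have lo: "g y - g z \<le> D * (y - z)"
    proof (cases "s = 1")
      case True then show ?thesis by (simp add: z_def l_def)
    next
      case False
      then have "s < 1" using s by simp
      then have "s*l < 1*l" using lpos by (intro mult_strict_right_mono) auto
      then have "z < y" by (simp add: z_def l_def)
      then show ?thesis using upper[of z y] by (simp add: divide_le_eq)
    qed
    have zx: "z - x = s * l" "y - z = (1 - s) * l" by (simp_all add: z_def l_def algebra_simps)
    have "g z - g x \<ge> s * (D*l) - \<eta> * (D * l)"
      using lo gyx zx by (simp add: l_def algebra_simps)
    moreover have "g z - g x \<le> s * (D*l)" using up zx by (simp add: algebra_simps)
    moreover have "\<eta> * (D*l) \<ge> 0" using eta Dpos lpos by simp
    ultimately show "\<bar>g (x + s*l) - g x - s*(D*l)\<bar> \<le> \<eta>*(D*l)"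
      unfolding z_def by linarith
  qed
qed

lemma slope_lemma:
  fixes g :: "real \<Rightarrow> real"
  assumes lip: "L-lipschitz_on UNIV g" and nc: "\<exists>s t. g s \<noteq> g t" and eta: "\<eta> > 0"
  shows "\<exists>x0 l \<Delta>. l > 0 \<and> \<Delta> \<noteq> 0 \<and> (\<forall>s\<in>{0..1}. \<bar>g (x0 + s*l) - g x0 - s*\<Delta>\<bar> \<le> \<eta>*\<bar>\<Delta>\<bar>)"
proof -
  obtain a b where ab: "a < b" "g a \<noteq> g b" using nc
    by (metis linorder_neqE_linordered_idom)
  show ?thesis
  proof (cases "g a < g b")
    case True
    from slope_incr[OF lip ab(1) True eta] show ?thesis
      by (metis abs_of_pos less_irrefl)
  next
    case False
    have lip': "L-lipschitz_on UNIV (\<lambda>t. - g t)"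
      using lip by (simp add: lipschitz_on_def dist_real_def abs_minus_commute)
    have "- g a < - g b" using False ab by simp
    from slope_incr[OF lip' ab(1) this eta] obtain x0 l \<Delta> where
      h: "l > 0" "\<Delta> > 0" "\<forall>s\<in>{0..1}. \<bar>- g (x0 + s*l) + g x0 - s*\<Delta>\<bar> \<le> \<eta>*\<Delta>" by auto
    show ?thesis
    proof (intro exI conjI ballI)
      show "l > 0" "- \<Delta> \<noteq> 0" using h by auto
      fix s :: real assume "s \<in> {0..1}"
      then have "\<bar>- g (x0 + s*l) + g x0 - s*\<Delta>\<bar> \<le> \<eta>*\<Delta>" using h by blast
      moreover have "\<bar>- g (x0 + s*l) + g x0 - s*\<Delta>\<bar> = \<bar>g (x0 + s*l) - g x0 - s*(-\<Delta>)\<bar>"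
        by (simp add: abs_minus_commute[of "- g (x0 + s*l) + g x0"] algebra_simps)
      moreover have "\<bar>-\<Delta>\<bar> = \<Delta>" using h by simp
      ultimately show "\<bar>g (x0 + s*l) - g x0 - s*(-\<Delta>)\<bar> \<le> \<eta>*\<bar>-\<Delta>\<bar>" by simp
    qed
  qed
qed

lemma shift1: "(\<Sum>k=1..(p::nat). F (k - 1)) = (\<Sum>i<p. (F i::real))"
  by (induction p) (auto simp: lessThan_Suc)

lemma expsum_nth: "expsum l x = (\<Sum>k=1..length l. fst (l!(k-1)) * exp (\<Sum>j\<in>UNIV. snd (l!(k-1)) j (x$j)))"
  unfolding expsum_def sum_list_sum_nth
  by (subst shift1[where F="\<lambda>i. fst (l!i) * exp (\<Sum>j\<in>UNIV. snd (l!i) j (x$j))"]) (simp add: atLeast0LessThan)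

lemma clamp_close: "s \<in> {0..1} \<Longrightarrow> \<bar>max 0 (min 1 v) - s\<bar> \<le> \<bar>v - (s::real)\<bar>"
  by (auto simp: max_def min_def)

theorem theorem1:
  fixes B :: "nat \<Rightarrow> nat \<Rightarrow> real \<Rightarrow> real"
    and Bj :: "'d::finite \<Rightarrow> nat \<Rightarrow> nat \<Rightarrow> real \<Rightarrow> real"
    and g :: "real \<Rightarrow> real"
    and f :: "real^'d \<Rightarrow> real"
    and \<epsilon> :: real
  assumes hB: "\<forall>k\<ge>1. basis_functions (B k)"
    and hBj: "\<forall>j. \<forall>k\<ge>1. basis_functions (Bj j k)"
    and g_range: "\<forall>t. 0 \<le> g t \<and> g t \<le> 1"
    and g_nonconst: "\<exists>s t. g s \<noteq> g t"
    and g_lip: "\<exists>L. L-lipschitz_on UNIV g"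
    and f_cont: "continuous_on {x. \<forall>j. 0 \<le> x$j \<and> x$j \<le> 1} f"
    and eps: "\<epsilon> > 0"
  shows "\<exists>p::nat. p \<ge> 1 \<and> (\<exists>(q::nat \<Rightarrow> nat) (qj::'d \<Rightarrow> nat \<Rightarrow> nat)
           (c::nat \<Rightarrow> nat \<Rightarrow> real) (cj::'d \<Rightarrow> nat \<Rightarrow> nat \<Rightarrow> real)
           (bk::nat \<Rightarrow> real) (b::real).
         (\<forall>k\<in>{1..p}. q k \<ge> 1 \<and> (\<forall>j. qj j k \<ge> 1)) \<and>
         (\<exists>\<delta><\<epsilon>. \<forall>x\<in>{x. \<forall>j. 0 \<le> x$j \<and> x$j \<le> 1}.
            \<bar>f x - ((\<Sum>k=1..p. \<Sum>l=1..q k. c k l *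
                 B k l (g ((\<Sum>j\<in>UNIV. \<Sum>r=1..qj j k. cj j k r * Bj j k r (x$j)) + bk k))) + b)\<bar> \<le> \<delta>))"
proof -
  let ?S = "{x::real^'d. \<forall>j. 0 \<le> x$j \<and> x$j \<le> 1}"
  define d where "d = real CARD('d)"
  have d0: "d \<ge> 0" by (simp add: d_def)
  obtain L where lip: "L-lipschitz_on UNIV g" using g_lip by blast
  have L0: "L \<ge> 0" using lipschitz_on_nonneg[OF lip] .
  obtain l0 where okl0: "okl l0" and apx0: "\<forall>x\<in>?S. \<bar>f x - expsum l0 x\<bar> < \<epsilon>/4"
    using SW_exp[OF f_cont, of "\<epsilon>/4"] eps by auto
  define l :: "(real \<times> ('d \<Rightarrow> real \<Rightarrow> real)) list" where "l = (0, \<lambda>j t. 0) # l0"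
  have okl: "okl l" using okl0 by (auto simp: okl_def l_def continuous_on_const)
  have apx: "\<forall>x\<in>?S. \<bar>f x - expsum l x\<bar> < \<epsilon>/4"
    using apx0 by (simp add: l_def expsum_def)
  define p where "p = length l"
  have p1: "p \<ge> 1" by (simp add: p_def l_def)
  define cc where "cc k = fst (l!(k-1))" for k
  define uu where "uu k = snd (l!(k-1))" for k
  have uu_cont: "continuous_on UNIV (uu k j)" if "k \<in> {1..p}" for k j
  proof -
    have "l!(k-1) \<in> set l" using that by (auto simp: p_def)
    then show ?thesis using okl by (auto simp: okl_def uu_def)
  qed
  have expsum_eq: "expsum l x = (\<Sum>k=1..p. cc k * exp (\<Sum>j\<in>UNIV. uu k j (x$j)))" for x
    unfolding expsum_nth p_def cc_def uu_def ..
  have "continuous_on {0..1} (\<lambda>t. \<Sum>k\<in>{1..p}. \<Sum>j\<in>UNIV. \<bar>uu k j t\<bar>)"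
    using continuous_on_subset[OF uu_cont] by (intro continuous_intros) auto
  then have "bounded ((\<lambda>t. \<Sum>k\<in>{1..p}. \<Sum>j\<in>UNIV. \<bar>uu k j t\<bar>) ` {0..1})"
    by (intro compact_imp_bounded compact_continuous_image) auto
  then obtain M where M0: "M > 0" and MM: "\<forall>t\<in>{0..1}. \<bar>\<Sum>k\<in>{1..p}. \<Sum>j\<in>UNIV. \<bar>uu k j t\<bar>\<bar> \<le> M"
    unfolding bounded_pos by auto
  have uuM: "\<bar>uu k j t\<bar> \<le> M" if "k \<in> {1..p}" "t \<in> {0..1}" for k j t
  proof -
    have "\<bar>uu k j t\<bar> \<le> (\<Sum>j\<in>UNIV. \<bar>uu k j t\<bar>)"
      by (rule member_le_sum) auto
    also have "\<dots> \<le> (\<Sum>k\<in>{1..p}. \<Sum>j\<in>UNIV. \<bar>uu k j t\<bar>)"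
      by (rule member_le_sum[OF that(1)]) (auto intro: sum_nonneg)
    also have "\<dots> \<le> M" using MM that(2) by fastforce
    finally show ?thesis .
  qed
  define H where "H = d * M + 1"
  have H0: "H > 0" using d0 M0 by (simp add: H_def add_nonneg_pos)
  have hbound: "\<bar>\<Sum>j\<in>UNIV. uu k j (x$j)\<bar> < H" if "k \<in> {1..p}" "x \<in> ?S" for k x
  proof -
    have "\<bar>\<Sum>j\<in>UNIV. uu k j (x$j)\<bar> \<le> (\<Sum>j\<in>UNIV. \<bar>uu k j (x$j)\<bar>)" by (rule sum_abs)
    also have "\<dots> \<le> of_nat (card (UNIV::'d set)) * M"
      by (rule sum_bounded_above) (use that uuM in auto)
    also have "\<dots> < H" by (simp add: H_def d_def)
    finally show ?thesis .
  qed
  define F where "F s = exp (2 * H * s - H)" for s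
  have "uniformly_continuous_on {0..1} F"
    by (rule compact_uniformly_continuous) (auto simp: F_def intro!: continuous_intros)
  define C where "C = (\<Sum>k=1..p. \<bar>cc k\<bar>) + 1"
  have C1: "C \<ge> 1" by (simp add: C_def sum_nonneg)
  define eF where "eF = \<epsilon> / (4*C)"
  have eF0: "eF > 0" using eps C1 by (simp add: eF_def)
  obtain \<delta>F where dF0: "\<delta>F > 0" and dF: "\<forall>x\<in>{0..1}. \<forall>x'\<in>{0..1}. dist x' x < \<delta>F \<longrightarrow> dist (F x') (F x) < eF"
    using \<open>uniformly_continuous_on {0..1} F\<close> eF0 unfolding uniformly_continuous_on_def by metis
  obtain x0 ll \<Delta> where ll0: "ll > 0" and D0: "\<Delta> \<noteq> 0"
    and slope: "\<forall>s\<in>{0..1}. \<bar>g (x0 + s*ll) - g x0 - s*\<Delta>\<bar> \<le> (\<delta>F/2)*\<bar>\<Delta>\<bar>"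
    using slope_lemma[OF lip g_nonconst, of "\<delta>F/2"] dF0 by auto
  define \<rho> where "\<rho> v = (v - g x0)/\<Delta>" for v
  define \<phi> where "\<phi> k v = cc k * F (max 0 (min 1 (\<rho> v)))" for k v
  define \<psi> where "\<psi> k j t = ll/(2*H) * uu k j t" for k j t
  define \<zeta> where "\<zeta> = \<delta>F*\<bar>\<Delta>\<bar>/(2*(L+1)*(d+1))"
  have z0: "\<zeta> > 0" using dF0 D0 L0 d0 by (simp add: \<zeta>_def)
  define \<theta> where "\<theta> = \<epsilon>/(4*p)"
  have th0: "\<theta> > 0" using eps p1 by (simp add: \<theta>_def)
  have "\<forall>jk::'d \<times> nat. \<exists>Q::nat \<times> (nat \<Rightarrow> real) \<times> real. snd jk \<in> {1..p} \<longrightarrow> fst Q \<ge> 1 \<and>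
          (\<forall>t\<in>{0..1}. \<bar>\<psi> (snd jk) (fst jk) t - ((\<Sum>r=1..fst Q. fst (snd Q) r * Bj (fst jk) (snd jk) r t) + snd (snd Q))\<bar> \<le> \<zeta>)"
  proof
    fix jk :: "'d \<times> nat"
    obtain j k where jk: "jk = (j, k)" by (cases jk)
    show "\<exists>Q::nat \<times> (nat \<Rightarrow> real) \<times> real. snd jk \<in> {1..p} \<longrightarrow> fst Q \<ge> 1 \<and>
          (\<forall>t\<in>{0..1}. \<bar>\<psi> (snd jk) (fst jk) t - ((\<Sum>r=1..fst Q. fst (snd Q) r * Bj (fst jk) (snd jk) r t) + snd (snd Q))\<bar> \<le> \<zeta>)"
    proof (cases "k \<in> {1..p}")
      case True
      have "continuous_on {0..1} (\<psi> k j)" unfolding \<psi>_def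
        by (intro continuous_intros continuous_on_subset[OF uu_cont[OF True]]) auto
      moreover have "basis_functions (Bj j k)" using hBj True by auto
      ultimately have "\<exists>q::nat. q \<ge> 1 \<and> (\<exists>(c::nat \<Rightarrow> real) (c0::real).
           (\<exists>\<delta><\<zeta>. \<forall>t\<in>{0..1}. \<bar>\<psi> k j t - ((\<Sum>r=1..q. c r * Bj j k r t) + c0)\<bar> \<le> \<delta>))"
        unfolding basis_functions_def using z0 by (elim allE[of _ "\<psi> k j"] allE[of _ \<zeta>]) simp
      then obtain q c c0 \<delta> where "q \<ge> 1" "\<delta> < \<zeta>"
        "\<forall>t\<in>{0..1}. \<bar>\<psi> k j t - ((\<Sum>r=1..q. c r * Bj j k r t) + c0)\<bar> \<le> \<delta>"
        by blast
      then have "fst (q, c, c0) \<ge> 1 \<and> (\<forall>t\<in>{0..1}. \<bar>\<psi> k j t - ((\<Sum>r=1..fst (q, c, c0). fst (snd (q, c, c0)) r * Bj j k r t) + snd (snd (q, c, c0)))\<bar> \<le> \<zeta>)"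
        by (simp; meson less_imp_le order_trans)
      then show ?thesis unfolding jk fst_conv snd_conv by (intro exI[of _ "(q, c, c0)"] impI) simp
    qed (use jk in auto)
  qed
  from choice[OF this] obtain QJ :: "'d \<times> nat \<Rightarrow> nat \<times> (nat \<Rightarrow> real) \<times> real" where
    QJ0: "\<forall>jk. snd jk \<in> {1..p} \<longrightarrow> fst (QJ jk) \<ge> 1 \<and>
          (\<forall>t\<in>{0..1}. \<bar>\<psi> (snd jk) (fst jk) t - ((\<Sum>r=1..fst (QJ jk). fst (snd (QJ jk)) r * Bj (fst jk) (snd jk) r t) + snd (snd (QJ jk)))\<bar> \<le> \<zeta>)"
    by blast
  have QJ: "k \<in> {1..p} \<Longrightarrow> fst (QJ (j,k)) \<ge> 1 \<and>
          (\<forall>t\<in>{0..1}. \<bar>\<psi> k j t - ((\<Sum>r=1..fst (QJ (j,k)). fst (snd (QJ (j,k))) r * Bj j k r t) + snd (snd (QJ (j,k))))\<bar> \<le> \<zeta>)" for j k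
    using QJ0[rule_format, of "(j,k)"] by simp
  have "\<forall>k. \<exists>Q::nat \<times> (nat \<Rightarrow> real) \<times> real. k \<in> {1..p} \<longrightarrow> fst Q \<ge> 1 \<and>
          (\<forall>v\<in>{0..1}. \<bar>\<phi> k v - ((\<Sum>r=1..fst Q. fst (snd Q) r * B k r v) + snd (snd Q))\<bar> \<le> \<theta>)"
  proof
    fix k
    show "\<exists>Q::nat \<times> (nat \<Rightarrow> real) \<times> real. k \<in> {1..p} \<longrightarrow> fst Q \<ge> 1 \<and>
          (\<forall>v\<in>{0..1}. \<bar>\<phi> k v - ((\<Sum>r=1..fst Q. fst (snd Q) r * B k r v) + snd (snd Q))\<bar> \<le> \<theta>)"
    proof (cases "k \<in> {1..p}")
      case True
      have "continuous_on {0..1} (\<phi> k)" unfolding \<phi>_def F_def \<rho>_def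
        using D0 by (auto intro!: continuous_intros)
      moreover have "basis_functions (B k)" using hB True by auto
      ultimately have "\<exists>q::nat. q \<ge> 1 \<and> (\<exists>(c::nat \<Rightarrow> real) (c0::real).
           (\<exists>\<delta><\<theta>. \<forall>v\<in>{0..1}. \<bar>\<phi> k v - ((\<Sum>r=1..q. c r * B k r v) + c0)\<bar> \<le> \<delta>))"
        unfolding basis_functions_def using th0 by (elim allE[of _ "\<phi> k"] allE[of _ \<theta>]) simp
      then obtain q c c0 \<delta> where "q \<ge> 1" "\<delta> < \<theta>"
        "\<forall>v\<in>{0..1}. \<bar>\<phi> k v - ((\<Sum>r=1..q. c r * B k r v) + c0)\<bar> \<le> \<delta>"
        by blast
      then have "fst (q, c, c0) \<ge> 1 \<and> (\<forall>v\<in>{0..1}. \<bar>\<phi> k v - ((\<Sum>r=1..fst (q, c, c0). fst (snd (q, c, c0)) r * B k r v) + snd (snd (q, c, c0)))\<bar> \<le> \<theta>)"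
        by (simp; meson less_imp_le order_trans)
      then show ?thesis by (intro exI[of _ "(q, c, c0)"] impI)
    qed auto
  qed
  from choice[OF this] obtain QB :: "nat \<Rightarrow> nat \<times> (nat \<Rightarrow> real) \<times> real" where
    QB: "\<And>k. k \<in> {1..p} \<Longrightarrow> fst (QB k) \<ge> 1 \<and>
          (\<forall>v\<in>{0..1}. \<bar>\<phi> k v - ((\<Sum>r=1..fst (QB k). fst (snd (QB k)) r * B k r v) + snd (snd (QB k)))\<bar> \<le> \<theta>)"
    by blast
  define qf where "qf k = fst (QB k)" for k
  define cf where "cf k = fst (snd (QB k))" for k
  define c0f where "c0f k = snd (snd (QB k))" for k
  define qjf where "qjf j k = fst (QJ (j,k))" for j k
  define cjf where "cjf j k = fst (snd (QJ (j,k)))" for j k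
  define c0jf where "c0jf j k = snd (snd (QJ (j,k)))" for j k
  define bkf where "bkf k = x0 + ll/2 + (\<Sum>j\<in>UNIV. c0jf j k)" for k
  define b0 where "b0 = (\<Sum>k=1..p. c0f k)"
  have conds: "\<forall>k\<in>{1..p}. qf k \<ge> 1 \<and> (\<forall>j. qjf j k \<ge> 1)"
    using QB QJ by (auto simp: qf_def qjf_def)
  define zt where "zt k x = (\<Sum>j\<in>UNIV. \<Sum>r=1..qjf j k. cjf j k r * Bj j k r (x$j)) + bkf k" for k x
  define T where "T k x = (\<Sum>l=1..qf k. cf k l * B k l (g (zt k x)))" for k x
  have perk: "\<bar>cc k * exp (\<Sum>j\<in>UNIV. uu k j (x$j)) - T k x - c0f k\<bar> \<le> \<bar>cc k\<bar> * eF + \<theta>"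
    if k: "k \<in> {1..p}" and x: "x \<in> ?S" for k x
  proof -
    define h where "h = (\<Sum>j\<in>UNIV. uu k j (x$j))"
    define s where "s = h/(2*H) + 1/2"
    have hH: "\<bar>h\<bar> < H" using hbound[OF k x] by (simp add: h_def)
    have s01: "s \<in> {0..1}" using hH H0 by (auto simp: s_def field_simps abs_less_iff)
    have hs: "h = 2 * H * s - H" using H0 by (simp add: s_def field_simps)
    define z where "z = (\<Sum>j\<in>UNIV. \<psi> k j (x$j)) + (x0 + ll/2)"
    have zs: "z = x0 + s*ll"
    proof -
      have "(\<Sum>j\<in>UNIV. \<psi> k j (x$j)) = ll/(2*H) * h"
        by (simp add: \<psi>_def h_def sum_distrib_left)
      then show ?thesis using H0 by (simp add: z_def s_def field_simps)
    qed
    have zdiff: "\<bar>zt k x - z\<bar> \<le> d * \<zeta>"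
    proof -
      have "zt k x - z = (\<Sum>j\<in>UNIV. ((\<Sum>r=1..qjf j k. cjf j k r * Bj j k r (x$j)) + c0jf j k) - \<psi> k j (x$j))"
        by (simp add: zt_def z_def bkf_def sum_subtractf sum.distrib)
      also have "\<bar>\<dots>\<bar> \<le> (\<Sum>j\<in>UNIV. \<bar>((\<Sum>r=1..qjf j k. cjf j k r * Bj j k r (x$j)) + c0jf j k) - \<psi> k j (x$j)\<bar>)"
        by (rule sum_abs)
      also have "\<dots> \<le> of_nat (card (UNIV::'d set)) * \<zeta>"
      proof (rule sum_bounded_above)
        fix j :: 'd
        have "x$j \<in> {0..1}" using x by auto
        then have "\<bar>\<psi> k j (x$j) - ((\<Sum>r=1..qjf j k. cjf j k r * Bj j k r (x$j)) + c0jf j k)\<bar> \<le> \<zeta>"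
          using QJ[OF k, of j] by (simp add: qjf_def cjf_def c0jf_def)
        then show "\<bar>((\<Sum>r=1..qjf j k. cjf j k r * Bj j k r (x$j)) + c0jf j k) - \<psi> k j (x$j)\<bar> \<le> \<zeta>"
          by (simp add: abs_minus_commute)
      qed
      finally show ?thesis by (simp add: d_def)
    qed
    have gdiff: "\<bar>g (zt k x) - g z\<bar> \<le> L * (d * \<zeta>)"
    proof -
      have "dist (g (zt k x)) (g z) \<le> L * dist (zt k x) z" using lipschitz_onD[OF lip] by simp
      then have "\<bar>g (zt k x) - g z\<bar> \<le> L * \<bar>zt k x - z\<bar>" by (simp add: dist_real_def)
      also have "\<dots> \<le> L * (d * \<zeta>)" using zdiff L0 by (intro mult_left_mono) auto
      finally show ?thesis .
    qed
    have "L * (d * \<zeta>) < (\<delta>F/2) * \<bar>\<Delta>\<bar>"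
    proof -
      have "L * d < (L+1)*(d+1)" using L0 d0 by (simp add: algebra_simps)
      then have "L * d / ((L+1)*(d+1)) < 1" using L0 d0 by simp
      then have "L * d / ((L+1)*(d+1)) * ((\<delta>F/2) * \<bar>\<Delta>\<bar>) < 1 * ((\<delta>F/2) * \<bar>\<Delta>\<bar>)"
        using dF0 D0 by (intro mult_strict_right_mono) auto
      moreover have "L * (d * \<zeta>) = L * d / ((L+1)*(d+1)) * ((\<delta>F/2) * \<bar>\<Delta>\<bar>)"
        by (simp add: \<zeta>_def field_simps)
      ultimately show ?thesis by simp
    qed
    then have r1: "\<bar>\<rho> (g (zt k x)) - \<rho> (g z)\<bar> < \<delta>F/2"
      using gdiff D0 by (simp add: \<rho>_def diff_divide_distrib[symmetric] abs_divide pos_divide_less_eq)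
    have r2: "\<bar>\<rho> (g z) - s\<bar> \<le> \<delta>F/2"
    proof -
      have "\<bar>g z - g x0 - s*\<Delta>\<bar> \<le> (\<delta>F/2)*\<bar>\<Delta>\<bar>" using slope s01 zs by auto
      moreover have "\<rho> (g z) - s = (g z - g x0 - s*\<Delta>)/\<Delta>" using D0 by (simp add: \<rho>_def field_simps)
      ultimately show ?thesis using D0 by (simp add: abs_divide pos_divide_le_eq)
    qed
    have cl: "\<bar>max 0 (min 1 (\<rho> (g (zt k x)))) - s\<bar> < \<delta>F"
      using clamp_close[OF s01, of "\<rho> (g (zt k x))"] r1 r2 by linarith
    have cl01: "max 0 (min 1 (\<rho> (g (zt k x)))) \<in> {0..1}" by auto
    have Fd: "\<bar>F (max 0 (min 1 (\<rho> (g (zt k x))))) - F s\<bar> < eF"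
      using dF cl01 s01 cl by (auto simp: dist_real_def)
    have e1: "\<bar>\<phi> k (g (zt k x)) - cc k * exp h\<bar> \<le> \<bar>cc k\<bar> * eF"
    proof -
      have "\<phi> k (g (zt k x)) - cc k * exp h = cc k * (F (max 0 (min 1 (\<rho> (g (zt k x))))) - F s)"
        by (simp add: \<phi>_def F_def hs algebra_simps)
      then show ?thesis using Fd by (simp add: abs_mult mult_left_mono)
    qed
    have g01: "g (zt k x) \<in> {0..1}" using g_range by auto
    have e2: "\<bar>\<phi> k (g (zt k x)) - (T k x + c0f k)\<bar> \<le> \<theta>"
      using QB[OF k] g01 by (simp add: T_def qf_def cf_def c0f_def)
    show ?thesis using e1 e2 unfolding h_def by linarith
  qed
  have final: "\<forall>x\<in>?S. \<bar>f x - ((\<Sum>k=1..p. \<Sum>l=1..qf k. cf k l *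
                 B k l (g ((\<Sum>j\<in>UNIV. \<Sum>r=1..qjf j k. cjf j k r * Bj j k r (x$j)) + bkf k))) + b0)\<bar> \<le> 3*\<epsilon>/4"
  proof
    fix x assume x: "x \<in> ?S"
    have "f x - ((\<Sum>k=1..p. T k x) + b0) = (f x - expsum l x)
            + (\<Sum>k=1..p. cc k * exp (\<Sum>j\<in>UNIV. uu k j (x$j)) - T k x - c0f k)"
      by (simp add: expsum_eq b0_def sum_subtractf)
    also have "\<bar>\<dots>\<bar> \<le> \<bar>f x - expsum l x\<bar> + (\<Sum>k=1..p. \<bar>cc k * exp (\<Sum>j\<in>UNIV. uu k j (x$j)) - T k x - c0f k\<bar>)"
      by (rule order_trans[OF abs_triangle_ineq add_left_mono[OF sum_abs]])
    also have "\<dots> \<le> \<epsilon>/4 + (\<Sum>k=1..p. \<bar>cc k\<bar> * eF + \<theta>)"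
      using apx x perk by (intro add_mono sum_mono) (auto intro: less_imp_le)
    also have "(\<Sum>k=1..p. \<bar>cc k\<bar> * eF + \<theta>) = (\<Sum>k=1..p. \<bar>cc k\<bar>) * eF + p * \<theta>"
      by (simp add: sum.distrib sum_distrib_right)
    also have "(\<Sum>k=1..p. \<bar>cc k\<bar>) * eF \<le> C * eF"
      using eF0 by (intro mult_right_mono) (auto simp: C_def)
    also have "C * eF = \<epsilon>/4" using C1 by (simp add: eF_def)
    also have "p * \<theta> = \<epsilon>/4" using p1 by (simp add: \<theta>_def)
    finally show "\<bar>f x - ((\<Sum>k=1..p. \<Sum>l=1..qf k. cf k l *
                 B k l (g ((\<Sum>j\<in>UNIV. \<Sum>r=1..qjf j k. cjf j k r * Bj j k r (x$j)) + bkf k))) + b0)\<bar> \<le> 3*\<epsilon>/4"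
      by (simp add: T_def zt_def)
  qed
  have "3*\<epsilon>/4 < \<epsilon>" using eps by simp
  with final have "\<exists>\<delta><\<epsilon>. \<forall>x\<in>?S. \<bar>f x - ((\<Sum>k=1..p. \<Sum>l=1..qf k. cf k l *
                 B k l (g ((\<Sum>j\<in>UNIV. \<Sum>r=1..qjf j k. cjf j k r * Bj j k r (x$j)) + bkf k))) + b0)\<bar> \<le> \<delta>"
    by blast
  then show ?thesis
    apply -
    apply (rule exI[of _ p], rule conjI[OF p1])
    apply (rule exI[of _ qf], rule exI[of _ qjf], rule exI[of _ cf], rule exI[of _ cjf], rule exI[of _ bkf], rule exI[of _ b0])
    using conds by (intro conjI)
qed

end
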